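(* Let $\mathcal{B}$ be an associative algebra over $\mathbb{C}$, let $\mathcal{A}$ denote the set of all matrices (of arbitrary finite sizes) with entries in $\mathcal{B}$, with the convention that the product of two matrices is defined to be zero if their sizes do not match, and let $\Omega = \mathcal{A}\otimes\bigwedge(\mathbb{C}^2)$. Suppose $(\Omega,\mathrm{d},\bar{\mathrm{d}})$ is a bidifferential calculus. Fix positive integers $n,N,N'$. Let $\boldsymbol{P},\boldsymbol{R}\in\mathrm{Mat}(N,N,\mathcal{B})$, $\tilde{\boldsymbol{U}}\in\mathrm{Mat}(n,N',\mathcal{B})$ and $\tilde{\boldsymbol{V}}\in\mathrm{Mat}(N,n,\mathcal{B})$ be both $\mathrm{d}$-constant and $\bar{\mathrm{d}}$-constant, and put $\boldsymbol{Q}=\tilde{\boldsymbol{V}}\tilde{\boldsymbol{U}}$. Let $\boldsymbol{X}\in\mathrm{Mat}(N,N,\mathcal{B})$ and $\boldsymbol{Y}\in\mathrm{Mat}(N',N,\mathcal{B})$ satisfy $$\bar{\mathrm{d}}\boldsymbol{X}=(\mathrm{d}\boldsymbol{X})\,\boldsymbol{P},\qquad \bar{\mathrm{d}}\boldsymbol{Y}=(\mathrm{d}\boldsymbol{Y})\,\boldsymbol{P},\qquad \boldsymbol{R}\boldsymbol{X}-\boldsymbol{X}\boldsymbol{P}=-\boldsymbol{Q}\boldsymbol{Y}.$$ If $\boldsymbol{X}$ is invertible, then $\phi=\tilde{\boldsymbol{U}}\boldsymbol{Y}\boldsymbol{X}^{-1}\tilde{\boldsymbol{V}}\in\mathrm{Mat}(n,n,\mathcal{B})$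 satisfies $$\bar{\mathrm{d}}\phi=(\mathrm{d}\phi)\,\phi+\mathrm{d}\vartheta\qquad\text{with}\qquad \vartheta=\tilde{\boldsymbol{U}}\boldsymbol{Y}\boldsymbol{X}^{-1}\boldsymbol{R}\tilde{\boldsymbol{V}},$$ and consequently $\bar{\mathrm{d}}\,\mathrm{d}\,\phi=\mathrm{d}\phi\;\mathrm{d}\phi$.
   Context: A graded algebra is an associative algebra $\Omega$ over $\mathbb{C}$ with a decomposition $\Omega=\bigoplus_{r\ge0}\Omega^r$ into a subalgebra $\Omega^0$ and $\Omega^0$-bimodules $\Omega^r$ with $\Omega^r\Omega^s\subseteq\Omega^{r+s}$; here $\Omega^r=\mathcal{A}\otimes\bigwedge^r(\mathbb{C}^2)$. A bidifferential calculus is a unital graded algebra $\Omega$ with two $\mathbb{C}$-linear maps $\mathrm{d},\bar{\mathrm{d}}:\Omega\to\Omega$ of degree one (mapping $\Omega^r$ into $\Omega^{r+1}$) such that, for every $z\in\mathbb{C}$, $\mathrm{d}_z:=\bar{\mathrm{d}}-z\,\mathrm{d}$ satisfies $\mathrm{d}_z^2=0$ and the graded Leibniz rule $\mathrm{d}_z(\chi\chi')=(\mathrm{d}_z\chi)\chi'+(-1)^r\chi\,\mathrm{d}_z\chi'$ for $\chi\in\Omega^r$, $\chi'\in\Omega$ (equivalently: $\mathrm{d},\bar{\mathrm{d}}$ are graded derivations with $\mathrm{d}^2=\bar{\mathrm{d}}^2=\mathrm{d}\bar{\mathrm{d}}+\bar{\mathrm{d}}\mathrm{d}=0$). Here $\mathrm{d}$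 and $\bar{\mathrm{d}}$ act on matrices of all sizes over $\mathcal{B}$, and the Leibniz rule holds for all products of matrices of compatible sizes. An element $\chi$ is called $\mathrm{d}$-constant if $\mathrm{d}\chi=0$ and $\bar{\mathrm{d}}$-constant if $\bar{\mathrm{d}}\chi=0$. *)

theory Defs
  imports Complex_Main "Jordan_Normal_Form.Matrix"
begin

text \<open>A homogeneous element of degree 0 of size r x c is a matrix in carrier_mat r c;
  a degree-1 element  a (x) xi1 + b (x) xi2  is the pair (a,b) of matrices of equal size;
  a degree-2 element  m (x) xi1 xi2  is the matrix m.  Omega^3 = 0.\<close>

type_synonym 'b form1 = "'b mat \<times> 'b mat"

definition wf1 :: "nat \<Rightarrow> nat \<Rightarrow> 'b form1 \<Rightarrow> bool" where
  "wf1 r c w \<longleftrightarrow> fst w \<in> carrier_mat r c \<and> snd w \<in> carrier_mat r c"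

definition add1 :: "'b::plus form1 \<Rightarrow> 'b form1 \<Rightarrow> 'b form1" where
  "add1 w v = (fst w + fst v, snd w + snd v)"

definition lmul1 :: "'b::semiring_0 mat \<Rightarrow> 'b form1 \<Rightarrow> 'b form1" where
  "lmul1 A w = (A * fst w, A * snd w)"

definition rmul1 :: "'b::semiring_0 form1 \<Rightarrow> 'b mat \<Rightarrow> 'b form1" where
  "rmul1 w B = (fst w * B, snd w * B)"

text \<open>product of two 1-forms: coefficient of xi1 xi2\<close>
definition wedge :: "'b::ring form1 \<Rightarrow> 'b form1 \<Rightarrow> 'b mat" where
  "wedge w v = fst w * snd v - snd w * fst v"

text \<open>B is a unital associative C-algebra: a unital ring with a ring homomorphism
  from C into its centre (scalar multiplication  c x = emb c * x).\<close>
definition complex_algebra :: "(complex \<Rightarrow> 'b::ring_1) \<Rightarrow> bool" where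
  "complex_algebra emb \<longleftrightarrow> emb 1 = 1 \<and> (\<forall>a b. emb (a + b) = emb a + emb b)
     \<and> (\<forall>a b. emb (a * b) = emb a * emb b) \<and> (\<forall>c x. emb c * x = x * emb c)"

text \<open>A C-linear, size-preserving map of degree one (D0 on Omega^0, D1 on Omega^1;
  it vanishes on Omega^2 since Omega^3 = 0) satisfying the graded Leibniz rule
  for all products of matrices of compatible sizes.\<close>
definition graded_derivation ::
  "(complex \<Rightarrow> 'b::ring_1) \<Rightarrow> ('b mat \<Rightarrow> 'b form1) \<Rightarrow> ('b form1 \<Rightarrow> 'b mat) \<Rightarrow> bool" where
  "graded_derivation emb D0 D1 \<longleftrightarrow>
     (\<forall>A. wf1 (dim_row A) (dim_col A) (D0 A))
   \<and> (\<forall>r c w. wf1 r c w \<longrightarrow> D1 w \<in> carrier_mat r c)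
   \<and> (\<forall>r c A B. A \<in> carrier_mat r c \<longrightarrow> B \<in> carrier_mat r c \<longrightarrow>
        D0 (A + B) = add1 (D0 A) (D0 B))
   \<and> (\<forall>r c w v. wf1 r c w \<longrightarrow> wf1 r c v \<longrightarrow> D1 (add1 w v) = D1 w + D1 v)
   \<and> (\<forall>c A. D0 (emb c \<cdot>\<^sub>m A) = (emb c \<cdot>\<^sub>m fst (D0 A), emb c \<cdot>\<^sub>m snd (D0 A)))
   \<and> (\<forall>c w. D1 (emb c \<cdot>\<^sub>m fst w, emb c \<cdot>\<^sub>m snd w) = emb c \<cdot>\<^sub>m D1 w)
   \<and> (\<forall>r k c A B. A \<in> carrier_mat r k \<longrightarrow> B \<in> carrier_mat k c \<longrightarrow>
        D0 (A * B) = add1 (rmul1 (D0 A) B) (lmul1 A (D0 B)))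
   \<and> (\<forall>r k c A w. A \<in> carrier_mat r k \<longrightarrow> wf1 k c w \<longrightarrow>
        D1 (lmul1 A w) = wedge (D0 A) w + A * D1 w)
   \<and> (\<forall>r k c w B. wf1 r k w \<longrightarrow> B \<in> carrier_mat k c \<longrightarrow>
        D1 (rmul1 w B) = D1 w * B - wedge w (D0 B))"

text \<open>Bidifferential calculus: d, dbar graded derivations with
  d^2 = dbar^2 = d dbar + dbar d = 0 (equivalently d_z = dbar - z d satisfies
  d_z^2 = 0 and the Leibniz rule for all z).\<close>
definition bidiff_calculus ::
  "(complex \<Rightarrow> 'b::ring_1) \<Rightarrow> ('b mat \<Rightarrow> 'b form1) \<Rightarrow> ('b form1 \<Rightarrow> 'b mat)
     \<Rightarrow> ('b mat \<Rightarrow> 'b form1) \<Rightarrow> ('b form1 \<Rightarrow> 'b mat) \<Rightarrow> bool" where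
  "bidiff_calculus emb d0 d1 db0 db1 \<longleftrightarrow>
     graded_derivation emb d0 d1 \<and> graded_derivation emb db0 db1
   \<and> (\<forall>A. d1 (d0 A) = 0\<^sub>m (dim_row A) (dim_col A))
   \<and> (\<forall>A. db1 (db0 A) = 0\<^sub>m (dim_row A) (dim_col A))
   \<and> (\<forall>A. d1 (db0 A) + db1 (d0 A) = 0\<^sub>m (dim_row A) (dim_col A))"

end

theory Submission
  imports Defs
begin

lemma massoc: "dim_col A = dim_row B \<Longrightarrow> dim_col B = dim_row C \<Longrightarrow> A*B*C = A*(B*C)"
  by (rule assoc_mult_mat[of A "dim_row A" "dim_col A" B "dim_col B" C "dim_col C"]) auto

lemma mdistl: "dim_col A = dim_row B \<Longrightarrow> dim_row B = dim_row C \<Longrightarrow> dim_col B = dim_col C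
   \<Longrightarrow> A*(B+C) = A*B+A*(C::'a::semiring_0 mat)"
  by (rule mult_add_distrib_mat[of A "dim_row A" "dim_col A" B "dim_col B"]) auto

lemma mdistr: "dim_row A = dim_row B \<Longrightarrow> dim_col A = dim_col B \<Longrightarrow> dim_col B = dim_row C
   \<Longrightarrow> (A+B)*C = A*C+B*(C::'a::semiring_0 mat)"
  by (rule add_mult_distrib_mat[of A "dim_row A" "dim_col A" B C "dim_col C"]) auto

lemma double_zero:
  assumes "(A::'a::ring mat) \<in> carrier_mat r c" "A = A + A" shows "A = 0\<^sub>m r c"
proof (rule eq_matI)
  fix i j assume ij: "i < dim_row (0\<^sub>m r c)" "j < dim_col (0\<^sub>m r c)"
  have "A $$ (i,j) = (A + A) $$ (i,j)" using assms(2) by (rule arg_cong)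
  also have "\<dots> = A $$ (i,j) + A $$ (i,j)" using ij assms(1) by auto
  finally show "A $$ (i,j) = 0\<^sub>m r c $$ (i,j)" using ij by simp
qed (use assms in auto)

lemma sum_zero_neg:
  assumes "(A::'a::ring mat) \<in> carrier_mat r c" "B \<in> carrier_mat r c" "A + B = 0\<^sub>m r c" shows "B = - A"
proof (rule eq_matI)
  fix i j assume ij: "i < dim_row (- A)" "j < dim_col (- A)"
  have ij': "i < r" "j < c" using ij assms(1) by auto
  have "(A + B) $$ (i,j) = 0\<^sub>m r c $$ (i,j)" using assms(3) by (rule arg_cong)
  then have "A $$ (i,j) + B $$ (i,j) = 0" using ij' assms(1,2) by simp
  then have "- A $$ (i,j) = B $$ (i,j)" by (rule minus_unique)
  then show "B $$ (i,j) = (- A) $$ (i,j)" using ij' assms(1) by simp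
qed (use assms(1,2) in auto)

lemma syl_solve:
  assumes "(A::'a::ring mat) \<in> carrier_mat r c" "B \<in> carrier_mat r c" "C \<in> carrier_mat r c"
   "A - B = - C" shows "C = B - A"
proof (rule eq_matI)
  fix i j assume ij: "i < dim_row (B - A)" "j < dim_col (B - A)"
  have ij': "i < r" "j < c" using ij assms(1,2) by auto
  have "(A - B) $$ (i,j) = (- C) $$ (i,j)" using assms(4) by (rule arg_cong)
  then have "A $$ (i,j) - B $$ (i,j) = - C $$ (i,j)" using ij' assms(1,2,3) by simp
  then have "C $$ (i,j) = B $$ (i,j) - A $$ (i,j)"
    by (metis minus_diff_eq minus_minus)
  then show "C $$ (i,j) = (B - A) $$ (i,j)" using ij' assms(1,2) by simp
qed (use assms(1,2,3) in auto)

lemma minus_add_cancel_mat: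
  assumes "(A::'a::ring mat) \<in> carrier_mat r c" "B \<in> carrier_mat r c"
  shows "A - B + B = A"
  using assms by (intro eq_matI) auto

lemma radd0: "dim_row A = r \<Longrightarrow> dim_col A = c \<Longrightarrow> A + 0\<^sub>m r c = (A::'a::monoid_add mat)"
  by (intro eq_matI) auto
lemma ladd0: "dim_row A = r \<Longrightarrow> dim_col A = c \<Longrightarrow> 0\<^sub>m r c + A = (A::'a::monoid_add mat)"
  by (intro eq_matI) auto

lemma mminus: "dim_row A = dim_row B \<Longrightarrow> dim_col A = dim_col B \<Longrightarrow> A - B = A + - (B::'a::group_add mat)"
  by (intro eq_matI) auto

lemma umr: "A \<in> carrier_mat r k \<Longrightarrow> B \<in> carrier_mat k c \<Longrightarrow> A * (- B) = - (A * (B::'a::ring mat))"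
  by (rule uminus_mult_right_mat) auto
lemma uml: "A \<in> carrier_mat r k \<Longrightarrow> B \<in> carrier_mat k c \<Longrightarrow> (- A) * B = - (A * (B::'a::ring mat))"
  by (rule uminus_mult_left_mat) auto

lemma der_one:
  assumes d: "\<And>A r c. A \<in> carrier_mat r c \<Longrightarrow> (\<delta> A :: 'b::ring_1 mat) \<in> carrier_mat r c"
    and p: "\<And>A B r k c. A \<in> carrier_mat r k \<Longrightarrow> B \<in> carrier_mat k c \<Longrightarrow> \<delta> (A*B) = \<delta> A * B + A * \<delta> B"
  shows "\<delta> (1\<^sub>m N) = 0\<^sub>m N N"
proof -
  have c1: "\<delta> (1\<^sub>m N) \<in> carrier_mat N N" by (rule d) simp
  have "\<delta> (1\<^sub>m N) = \<delta> (1\<^sub>m N * 1\<^sub>m N)" by simp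
  also have "\<dots> = \<delta> (1\<^sub>m N) * 1\<^sub>m N + 1\<^sub>m N * \<delta> (1\<^sub>m N)" by (rule p) auto
  also have "\<dots> = \<delta> (1\<^sub>m N) + \<delta> (1\<^sub>m N)"
    using right_mult_one_mat[OF c1] left_mult_one_mat[OF c1] by simp
  finally show ?thesis using c1 double_zero by blast
qed

lemma der_inv:
  assumes d: "\<And>A r c. A \<in> carrier_mat r c \<Longrightarrow> (\<delta> A :: 'b::ring_1 mat) \<in> carrier_mat r c"
    and p: "\<And>A B r k c. A \<in> carrier_mat r k \<Longrightarrow> B \<in> carrier_mat k c \<Longrightarrow> \<delta> (A*B) = \<delta> A * B + A * \<delta> B"
    and cX: "X \<in> carrier_mat N N" and cXi: "Xinv \<in> carrier_mat N N"
    and i1: "X * Xinv = 1\<^sub>m N" and i2: "Xinv * X = 1\<^sub>m N"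
    and dX: "\<delta> X = Z" and cZ: "Z \<in> carrier_mat N N"
  shows "\<delta> Xinv = - (Xinv * (Z * Xinv))"
proof -
  have cdXi: "\<delta> Xinv \<in> carrier_mat N N" using d cXi .
  have "Z * Xinv + X * \<delta> Xinv = \<delta> (X * Xinv)" using p[OF cX cXi] dX by simp
  also have "\<dots> = 0\<^sub>m N N" unfolding i1 by (rule der_one[OF d p])
  finally have e: "Z * Xinv + X * \<delta> Xinv = 0\<^sub>m N N" .
  have hX: "X * \<delta> Xinv = - (Z * Xinv)"
    by (rule sum_zero_neg[OF mult_carrier_mat[OF cZ cXi] mult_carrier_mat[OF cX cdXi] e])
  have "\<delta> Xinv = 1\<^sub>m N * \<delta> Xinv" using left_mult_one_mat[OF cdXi] by simp
  also have "\<dots> = Xinv * X * \<delta> Xinv" unfolding i2 ..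
  also have "\<dots> = Xinv * (X * \<delta> Xinv)" by (rule assoc_mult_mat[OF cXi cX cdXi])
  also have "\<dots> = Xinv * (- (Z * Xinv))" unfolding hX ..
  also have "\<dots> = - (Xinv * (Z * Xinv))" by (rule umr[OF cXi mult_carrier_mat[OF cZ cXi]])
  finally show ?thesis .
qed

lemma component:
  fixes \<delta> \<epsilon> :: "'b::ring_1 mat \<Rightarrow> 'b mat"
  assumes d\<delta>: "\<And>A r c. A \<in> carrier_mat r c \<Longrightarrow> \<delta> A \<in> carrier_mat r c"
    and p\<delta>: "\<And>A B r k c. A \<in> carrier_mat r k \<Longrightarrow> B \<in> carrier_mat k c \<Longrightarrow> \<delta> (A*B) = \<delta> A * B + A * \<delta> B"
    and d\<epsilon>: "\<And>A r c. A \<in> carrier_mat r c \<Longrightarrow> \<epsilon> A \<in> carrier_mat r c"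
    and p\<epsilon>: "\<And>A B r k c. A \<in> carrier_mat r k \<Longrightarrow> B \<in> carrier_mat k c \<Longrightarrow> \<epsilon> (A*B) = \<epsilon> A * B + A * \<epsilon> B"
    and cP: "P \<in> carrier_mat N N" and cR: "R \<in> carrier_mat N N" and cU: "Ut \<in> carrier_mat n N'"
    and cV: "Vt \<in> carrier_mat N n" and cX: "X \<in> carrier_mat N N" and cY: "Y \<in> carrier_mat N' N"
    and const: "\<delta> R = 0\<^sub>m N N" "\<delta> Ut = 0\<^sub>m n N'" "\<epsilon> Ut = 0\<^sub>m n N'" 
      "\<delta> Vt = 0\<^sub>m N n" "\<epsilon> Vt = 0\<^sub>m N n"
    and eqX: "\<epsilon> X = \<delta> X * P"
    and eqY: "\<epsilon> Y = \<delta> Y * P"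
    and syl: "R * X - X * P = - ((Vt * Ut) * Y)"
    and cXi: "Xinv \<in> carrier_mat N N" and i1: "X * Xinv = 1\<^sub>m N" and i2: "Xinv * X = 1\<^sub>m N"
  shows "\<epsilon> (Ut * Y * Xinv * Vt) = \<delta> (Ut * Y * Xinv * Vt) * (Ut * Y * Xinv * Vt)
                  + \<delta> (Ut * Y * Xinv * R * Vt)"
proof -
  define dX where "dX = \<delta> X"
  define dY where "dY = \<delta> Y"
  have cdX: "dX \<in> carrier_mat N N" unfolding dX_def by (rule d\<delta>[OF cX])
  have cdY: "dY \<in> carrier_mat N' N" unfolding dY_def by (rule d\<delta>[OF cY])
  have cdXP: "dX * P \<in> carrier_mat N N" using cdX cP by (rule mult_carrier_mat)
  have hdXi: "\<delta> Xinv = - (Xinv * (dX * Xinv))"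
    by (rule der_inv[OF d\<delta> p\<delta> cX cXi i1 i2 dX_def[symmetric] cdX])
  have heXi: "\<epsilon> Xinv = - (Xinv * (dX * P * Xinv))"
  proof -
    have e: "\<epsilon> X = dX * P" unfolding dX_def by (rule eqX)
    show ?thesis by (rule der_inv[where \<delta>=\<epsilon>, OF d\<epsilon> p\<epsilon> cX cXi i1 i2 e cdXP])
  qed
  define dXi where "dXi = \<delta> Xinv"
  define eXi where "eXi = \<epsilon> Xinv"
  have cdXi: "dXi \<in> carrier_mat N N" unfolding dXi_def by (rule d\<delta>[OF cXi])
  have ceXi: "eXi \<in> carrier_mat N N" unfolding eXi_def by (rule d\<epsilon>[OF cXi])
  have cUY: "Ut * Y \<in> carrier_mat n N" using cU cY by (rule mult_carrier_mat)
  have cUYX: "Ut * Y * Xinv \<in> carrier_mat n N" using cUY cXi by (rule mult_carrier_mat)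
  define G where "G = Ut * dY * Xinv + Ut * Y * dXi"
  have cG: "G \<in> carrier_mat n N" unfolding G_def using cU cdY cXi cY cdXi by auto
  have dUY: "\<delta> (Ut * Y) = Ut * dY"
  proof -
    have "\<delta> (Ut * Y) = 0\<^sub>m n N' * Y + Ut * dY" unfolding dY_def using p\<delta>[OF cU cY] const(2) by simp
    also have "\<dots> = Ut * dY" using left_mult_zero_mat[OF cY] mult_carrier_mat[OF cU cdY] by simp
    finally show ?thesis .
  qed
  have eUY: "\<epsilon> (Ut * Y) = Ut * (dY * P)"
  proof -
    have "\<epsilon> (Ut * Y) = 0\<^sub>m n N' * Y + Ut * (dY * P)" unfolding dY_def using p\<epsilon>[OF cU cY] const(3) eqY by simp
    also have "\<dots> = Ut * (dY * P)" using left_mult_zero_mat[OF cY] mult_carrier_mat[OF cU mult_carrier_mat[OF cdY cP]] by simp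
    finally show ?thesis .
  qed
  have dUYX: "\<delta> (Ut * Y * Xinv) = G"
    unfolding G_def dXi_def using p\<delta>[OF cUY cXi] dUY by simp
  have eUYX: "\<epsilon> (Ut * Y * Xinv) = Ut * (dY * P) * Xinv + Ut * Y * eXi"
    unfolding eXi_def using p\<epsilon>[OF cUY cXi] eUY by simp
  have dphi: "\<delta> (Ut * Y * Xinv * Vt) = G * Vt"
  proof -
    have "\<delta> (Ut * Y * Xinv * Vt) = G * Vt + Ut * Y * Xinv * 0\<^sub>m N n"
      using p\<delta>[OF cUYX cV] dUYX const(4) by simp
    also have "\<dots> = G * Vt" using right_mult_zero_mat[OF cUYX] mult_carrier_mat[OF cG cV] by simp
    finally show ?thesis .
  qed
  have ephi: "\<epsilon> (Ut * Y * Xinv * Vt) = (Ut * (dY * P) * Xinv + Ut * Y * eXi) * Vt"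
  proof -
    have c: "Ut * (dY * P) * Xinv + Ut * Y * eXi \<in> carrier_mat n N"
      using cU cdY cP cXi cY ceXi by auto
    have "\<epsilon> (Ut * Y * Xinv * Vt) = (Ut * (dY * P) * Xinv + Ut * Y * eXi) * Vt + Ut * Y * Xinv * 0\<^sub>m N n"
      using p\<epsilon>[OF cUYX cV] eUYX const(5) by simp
    also have "\<dots> = (Ut * (dY * P) * Xinv + Ut * Y * eXi) * Vt"
      using right_mult_zero_mat[OF cUYX] mult_carrier_mat[OF c cV] by simp
    finally show ?thesis .
  qed
  have dth: "\<delta> (Ut * Y * Xinv * R * Vt) = G * R * Vt"
  proof -
    have cUYXR: "Ut * Y * Xinv * R \<in> carrier_mat n N" using cUYX cR by (rule mult_carrier_mat)
    have a: "\<delta> (Ut * Y * Xinv * R) = G * R"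
    proof -
      have "\<delta> (Ut * Y * Xinv * R) = G * R + Ut * Y * Xinv * 0\<^sub>m N N"
        using p\<delta>[OF cUYX cR] dUYX const(1) by simp
      also have "\<dots> = G * R" using right_mult_zero_mat[OF cUYX] mult_carrier_mat[OF cG cR] by simp
      finally show ?thesis .
    qed
    have "\<delta> (Ut * Y * Xinv * R * Vt) = G * R * Vt + Ut * Y * Xinv * R * 0\<^sub>m N n"
      using p\<delta>[OF cUYXR cV] a const(4) by simp
    also have "\<dots> = G * R * Vt" using right_mult_zero_mat[OF cUYXR] mult_carrier_mat[OF mult_carrier_mat[OF cG cR] cV] by simp
    finally show ?thesis .
  qed
  have K: "Vt * Ut * Y = X * P - R * X"
    using syl_solve[OF mult_carrier_mat[OF cR cX] mult_carrier_mat[OF cX cP] mult_carrier_mat[OF mult_carrier_mat[OF cV cU] cY] syl] .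
  note dms = carrier_matD[OF cG] carrier_matD[OF cP] carrier_matD[OF cR] carrier_matD[OF cU]
    carrier_matD[OF cV] carrier_matD[OF cX] carrier_matD[OF cY] carrier_matD[OF cXi]
    carrier_matD[OF cdX] carrier_matD[OF cdY] carrier_matD[OF cdXi] carrier_matD[OF ceXi]
  have cXP: "X * P \<in> carrier_mat N N" using cX cP by (rule mult_carrier_mat)
  have cRX: "R * X \<in> carrier_mat N N" using cR cX by (rule mult_carrier_mat)
  have s1: "G * Vt * (Ut * Y * Xinv * Vt) = G * ((Vt * Ut * Y) * Xinv) * Vt"
  proof -
    have e1: "Vt * Ut * Y * Xinv = Vt * (Ut * Y * Xinv)"
    proof -
      have "Vt * Ut * Y * Xinv = Vt * Ut * (Y * Xinv)"
        by (rule assoc_mult_mat[OF mult_carrier_mat[OF cV cU] cY cXi])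
      also have "\<dots> = Vt * (Ut * (Y * Xinv))"
        by (rule assoc_mult_mat[OF cV cU mult_carrier_mat[OF cY cXi]])
      also have "Ut * (Y * Xinv) = Ut * Y * Xinv"
        by (rule assoc_mult_mat[OF cU cY cXi, symmetric])
      finally show ?thesis .
    qed
    have "G * Vt * (Ut * Y * Xinv * Vt) = G * (Vt * (Ut * Y * Xinv * Vt))"
      by (rule assoc_mult_mat[OF cG cV mult_carrier_mat[OF cUYX cV]])
    also have "Vt * (Ut * Y * Xinv * Vt) = Vt * (Ut * Y * Xinv) * Vt"
      by (rule assoc_mult_mat[OF cV cUYX cV, symmetric])
    also have "G * (Vt * (Ut * Y * Xinv) * Vt) = G * (Vt * (Ut * Y * Xinv)) * Vt"
      by (rule assoc_mult_mat[OF cG mult_carrier_mat[OF cV cUYX] cV, symmetric])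
    finally show ?thesis unfolding e1 .
  qed
  have s2: "(Vt * Ut * Y) * Xinv = X * P * Xinv - R"
  proof -
    have "(Vt * Ut * Y) * Xinv = X * P * Xinv - R * X * Xinv"
      unfolding K by (rule minus_mult_distrib_mat[OF cXP cRX cXi])
    also have "R * X * Xinv = R" using cR cX cXi i1 by simp
    finally show ?thesis .
  qed
  have cXPXi: "X * P * Xinv \<in> carrier_mat N N" using cXP cXi by (rule mult_carrier_mat)
  have s3: "G * (X * P * Xinv - R) * Vt = G * X * P * Xinv * Vt - G * R * Vt"
  proof -
    have "G * (X * P * Xinv - R) = G * (X * P * Xinv) - G * R"
      by (rule mult_minus_distrib_mat[OF cG cXPXi cR])
    also have "G * (X * P * Xinv) = G * X * P * Xinv" by (simp add: massoc dms)
    finally have e: "G * (X * P * Xinv - R) = G * X * P * Xinv - G * R" .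
    have c1: "G * X * P * Xinv \<in> carrier_mat n N" using cG cX cP cXi by auto
    have c2: "G * R \<in> carrier_mat n N" using cG cR by auto
    show ?thesis unfolding e by (rule minus_mult_distrib_mat[OF c1 c2 cV])
  qed
  have s5: "G * X = Ut * dY - Ut * Y * Xinv * dX"
  proof -
    have "G * X = Ut * dY * Xinv * X + Ut * Y * dXi * X"
      unfolding G_def using cU cdY cXi cY cdXi cX by (simp add: add_mult_distrib_mat[of _ n N])
    also have "Ut * dY * Xinv * X = Ut * dY" by (simp add: massoc dms i2)
    also have "Ut * Y * dXi * X = - (Ut * Y * Xinv * dX)"
    proof -
      have "dXi * X = - (Xinv * dX)"
        unfolding dXi_def hdXi by (simp add: massoc dms i2)
      then show ?thesis by (simp add: massoc dms)
    qed
    finally have e: "G * X = Ut * dY + - (Ut * Y * Xinv * dX)" .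
    have c1: "Ut * dY \<in> carrier_mat n N" using cU cdY by (rule mult_carrier_mat)
    have c2: "Ut * Y * Xinv * dX \<in> carrier_mat n N" using cUYX cdX by (rule mult_carrier_mat)
    show ?thesis unfolding e by (rule add_uminus_minus_mat[OF c1 c2])
  qed
  have s6: "G * X * P * Xinv * Vt = Ut * dY * P * Xinv * Vt - Ut * Y * Xinv * dX * P * Xinv * Vt"
    unfolding s5 by (simp add: mminus mdistr massoc dms)
  have s7: "\<epsilon> (Ut * Y * Xinv * Vt) = Ut * dY * P * Xinv * Vt - Ut * Y * Xinv * dX * P * Xinv * Vt"
    unfolding ephi eXi_def heXi by (simp add: mminus mdistr massoc dms)
  have "\<delta> (Ut * Y * Xinv * Vt) * (Ut * Y * Xinv * Vt) + \<delta> (Ut * Y * Xinv * R * Vt)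
     = G * X * P * Xinv * Vt - G * R * Vt + G * R * Vt"
    unfolding dphi dth s1 s2 s3 ..
  also have "\<dots> = G * X * P * Xinv * Vt"
    using cG cR cV cX cP cXi by (intro minus_add_cancel_mat[of _ n n]) auto
  finally show ?thesis using s6 s7 by simp
qed

lemma gd_fst:
  assumes "graded_derivation emb D0 D1"
  shows "\<And>A r c. A \<in> carrier_mat r c \<Longrightarrow> fst (D0 A) \<in> carrier_mat r c"
    and "\<And>A B r k c. A \<in> carrier_mat r k \<Longrightarrow> B \<in> carrier_mat k c \<Longrightarrow>
           fst (D0 (A*B)) = fst (D0 A) * B + A * fst (D0 B)"
    and "\<And>A r c. A \<in> carrier_mat r c \<Longrightarrow> snd (D0 A) \<in> carrier_mat r c"
    and "\<And>A B r k c. A \<in> carrier_mat r k \<Longrightarrow> B \<in> carrier_mat k c \<Longrightarrow>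
           snd (D0 (A*B)) = snd (D0 A) * B + A * snd (D0 B)"
proof -
  note G = assms[unfolded graded_derivation_def]
  have w: "\<And>A. wf1 (dim_row A) (dim_col A) (D0 A)" using G[THEN conjunct1] by blast
  have p: "\<And>A B r k c. A \<in> carrier_mat r k \<Longrightarrow> B \<in> carrier_mat k c \<Longrightarrow>
        D0 (A * B) = add1 (rmul1 (D0 A) B) (lmul1 A (D0 B))"
    using G[THEN conjunct2, THEN conjunct2, THEN conjunct2, THEN conjunct2, THEN conjunct2,
       THEN conjunct2, THEN conjunct1] by blast
  have wc: "fst (D0 A) \<in> carrier_mat r c \<and> snd (D0 A) \<in> carrier_mat r c" if "A \<in> carrier_mat r c" for A r c
  proof -
    have "dim_row A = r" "dim_col A = c" using that by auto
    then show ?thesis using w[of A] unfolding wf1_def by simp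
  qed
  show "\<And>A r c. A \<in> carrier_mat r c \<Longrightarrow> fst (D0 A) \<in> carrier_mat r c"
    "\<And>A r c. A \<in> carrier_mat r c \<Longrightarrow> snd (D0 A) \<in> carrier_mat r c"
    using wc by blast+
  show "\<And>A B r k c. A \<in> carrier_mat r k \<Longrightarrow> B \<in> carrier_mat k c \<Longrightarrow>
           fst (D0 (A*B)) = fst (D0 A) * B + A * fst (D0 B)"
    "\<And>A B r k c. A \<in> carrier_mat r k \<Longrightarrow> B \<in> carrier_mat k c \<Longrightarrow>
           snd (D0 (A*B)) = snd (D0 A) * B + A * snd (D0 B)"
    using p unfolding add1_def rmul1_def lmul1_def by simp_all
qed

lemma final_simp:
  assumes "(W::'a::ring mat) \<in> carrier_mat n n" "F \<in> carrier_mat n n"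
  shows "0\<^sub>m n n * F - W + 0\<^sub>m n n = - W"
  using assms by (intro eq_matI) auto

theorem theorem1:
  fixes emb :: "complex \<Rightarrow> 'b::ring_1"
    and d0 db0 :: "'b mat \<Rightarrow> 'b form1" and d1 db1 :: "'b form1 \<Rightarrow> 'b mat"
    and n N N' :: nat
    and P R X Xinv Y Ut Vt :: "'b mat"
  assumes alg: "complex_algebra emb"
    and calc: "bidiff_calculus emb d0 d1 db0 db1"
    and pos: "0 < n" "0 < N" "0 < N'"
    and dims: "P \<in> carrier_mat N N" "R \<in> carrier_mat N N" "Ut \<in> carrier_mat n N'"
      "Vt \<in> carrier_mat N n" "X \<in> carrier_mat N N" "Y \<in> carrier_mat N' N"
    and const: "d0 P = (0\<^sub>m N N, 0\<^sub>m N N)" "db0 P = (0\<^sub>m N N, 0\<^sub>m N N)"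
      "d0 R = (0\<^sub>m N N, 0\<^sub>m N N)" "db0 R = (0\<^sub>m N N, 0\<^sub>m N N)"
      "d0 Ut = (0\<^sub>m n N', 0\<^sub>m n N')" "db0 Ut = (0\<^sub>m n N', 0\<^sub>m n N')"
      "d0 Vt = (0\<^sub>m N n, 0\<^sub>m N n)" "db0 Vt = (0\<^sub>m N n, 0\<^sub>m N n)"
    and eqX: "db0 X = rmul1 (d0 X) P"
    and eqY: "db0 Y = rmul1 (d0 Y) P"
    and syl: "R * X - X * P = - ((Vt * Ut) * Y)"
    and inv: "Xinv \<in> carrier_mat N N" "X * Xinv = 1\<^sub>m N" "Xinv * X = 1\<^sub>m N"
  shows "db0 (Ut * Y * Xinv * Vt)
           = add1 (rmul1 (d0 (Ut * Y * Xinv * Vt)) (Ut * Y * Xinv * Vt))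
                  (d0 (Ut * Y * Xinv * R * Vt))
       \<and> db1 (d0 (Ut * Y * Xinv * Vt))
           = wedge (d0 (Ut * Y * Xinv * Vt)) (d0 (Ut * Y * Xinv * Vt))"
proof -
  note BC = calc[unfolded bidiff_calculus_def]
  have gd: "graded_derivation emb d0 d1" "graded_derivation emb db0 db1"
    using BC[THEN conjunct1] BC[THEN conjunct2, THEN conjunct1] by -
  note F1 = gd_fst[OF gd(1)] and F2 = gd_fst[OF gd(2)]
  define phi where "phi = Ut * Y * Xinv * Vt"
  define th where "th = Ut * Y * Xinv * R * Vt"
  have cUYX: "Ut * Y * Xinv \<in> carrier_mat n N"
    using mult_carrier_mat[OF mult_carrier_mat[OF dims(3) dims(6)] inv(1)] .
  have cphi: "phi \<in> carrier_mat n n" unfolding phi_def using mult_carrier_mat[OF cUYX dims(4)] .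
  have cth: "th \<in> carrier_mat n n" unfolding th_def using mult_carrier_mat[OF mult_carrier_mat[OF cUYX dims(2)] dims(4)] .
  have c1: "fst (db0 phi) = fst (d0 phi) * phi + fst (d0 th)"
    unfolding phi_def th_def
    by (rule component[where \<delta>="\<lambda>A. fst (d0 A)" and \<epsilon>="\<lambda>A. fst (db0 A)",
          OF F1(1) F1(2) F2(1) F2(2) dims _ _ _ _ _ _ _ syl inv])
       (use const eqX eqY in \<open>simp_all add: rmul1_def\<close>)
  have c2: "snd (db0 phi) = snd (d0 phi) * phi + snd (d0 th)"
    unfolding phi_def th_def
    by (rule component[where \<delta>="\<lambda>A. snd (d0 A)" and \<epsilon>="\<lambda>A. snd (db0 A)",
          OF F1(3) F1(4) F2(3) F2(4) dims _ _ _ _ _ _ _ syl inv])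
       (use const eqX eqY in \<open>simp_all add: rmul1_def\<close>)
  have part1: "db0 phi = add1 (rmul1 (d0 phi) phi) (d0 th)"
    using c1 c2 unfolding add1_def rmul1_def by (simp add: prod_eq_iff)
  have wf: "\<And>A. wf1 (dim_row A) (dim_col A) (d0 A)"
    and d1wf: "\<And>r c w. wf1 r c w \<Longrightarrow> d1 w \<in> carrier_mat r c"
    and d1add: "\<And>r c w v. wf1 r c w \<Longrightarrow> wf1 r c v \<Longrightarrow> d1 (add1 w v) = d1 w + d1 v"
    and d1r: "\<And>r k c w B. wf1 r k w \<Longrightarrow> B \<in> carrier_mat k c \<Longrightarrow>
        d1 (rmul1 w B) = d1 w * B - wedge w (d0 B)"
  proof -
    note G = gd(1)[unfolded graded_derivation_def]
    show "\<And>A. wf1 (dim_row A) (dim_col A) (d0 A)" using G[THEN conjunct1] by blast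
    show "\<And>r c w. wf1 r c w \<Longrightarrow> d1 w \<in> carrier_mat r c"
      using G[THEN conjunct2, THEN conjunct1] by blast
    show "\<And>r c w v. wf1 r c w \<Longrightarrow> wf1 r c v \<Longrightarrow> d1 (add1 w v) = d1 w + d1 v"
      using G[THEN conjunct2, THEN conjunct2, THEN conjunct2, THEN conjunct1] by blast
    show "\<And>r k c w B. wf1 r k w \<Longrightarrow> B \<in> carrier_mat k c \<Longrightarrow>
        d1 (rmul1 w B) = d1 w * B - wedge w (d0 B)"
      using G[THEN conjunct2, THEN conjunct2, THEN conjunct2, THEN conjunct2, THEN conjunct2,
       THEN conjunct2, THEN conjunct2, THEN conjunct2] by blast
  qed
  have db1wf: "\<And>r c w. wf1 r c w \<Longrightarrow> db1 w \<in> carrier_mat r c"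
    using gd(2)[unfolded graded_derivation_def, THEN conjunct2, THEN conjunct1] by blast
  have dd: "\<And>A. d1 (d0 A) = 0\<^sub>m (dim_row A) (dim_col A)"
    using BC[THEN conjunct2, THEN conjunct2, THEN conjunct1] by blast
  have anti: "\<And>A. d1 (db0 A) + db1 (d0 A) = 0\<^sub>m (dim_row A) (dim_col A)"
    using BC[THEN conjunct2, THEN conjunct2, THEN conjunct2, THEN conjunct2] by blast
  have rphi: "dim_row phi = n" "dim_col phi = n" using cphi by auto
  have rth: "dim_row th = n" "dim_col th = n" using cth by auto
  have wphi: "wf1 n n (d0 phi)" using wf[of phi] unfolding rphi .
  have wth: "wf1 n n (d0 th)" using wf[of th] unfolding rth .
  have wr: "wf1 n n (rmul1 (d0 phi) phi)"
    using wphi cphi unfolding wf1_def rmul1_def by auto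
  define W where "W = wedge (d0 phi) (d0 phi)"
  have cW: "W \<in> carrier_mat n n" using wphi unfolding W_def wf1_def wedge_def by auto
  have "d1 (db0 phi) = d1 (rmul1 (d0 phi) phi) + d1 (d0 th)"
    unfolding part1 by (rule d1add[OF wr wth])
  also have "\<dots> = 0\<^sub>m n n * phi - W + 0\<^sub>m n n"
    unfolding d1r[OF wphi cphi] dd rphi rth W_def ..
  also have "\<dots> = - W" by (rule final_simp[OF cW cphi])
  finally have e1: "d1 (db0 phi) = - W" .
  have "- W + db1 (d0 phi) = 0\<^sub>m n n" using anti[of phi] unfolding e1 rphi .
  then have "db1 (d0 phi) = - (- W)"
    by (rule sum_zero_neg[OF uminus_carrier_mat[OF cW] db1wf[OF wphi]])
  then have part2: "db1 (d0 phi) = W" by simp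
  show ?thesis using part1 part2 unfolding phi_def th_def W_def by blast
qed

end
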